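(* (Fidelity susceptibility integral.) Let $x_0,\dots,x_q$ be complex numbers (repetitions allowed), $q\ge1$, $0\le j\le q-1$, and $\beta>0$. Then $$\int_0^{\beta/2}\tau\,e^{-\tau[x_{j+1},\ldots,x_q]}\,e^{-(\beta-\tau)[x_0,\ldots,x_j]}\,\mathrm{d}\tau=\sum_{r=0}^{j}e^{-\frac{\beta}{2}[x_0,\ldots,x_r]}\sum_{m=j+1}^{q}e^{-\frac{\beta}{2}[x_r,\ldots,x_q,x_m]}.$$
   Context: For $t\in\mathbb{R}$ and numbers $y_0,\dots,y_p$ (repetitions allowed), $e^{t[y_0,\ldots,y_p]}$ denotes the divided difference of $f(x)=e^{tx}$, $f[y_0,\ldots,y_p]=\frac{1}{2\pi i}\oint_\Gamma\frac{f(x)}{\prod_{i=0}^p(x-y_i)}\,\mathrm{d}x$, $\Gamma$ a positively oriented contour enclosing all $y_i$. The multiset $[x_r,\ldots,x_q,x_m]$ contains $x_m$ twice. *)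

theory Defs
  imports "HOL-Complex_Analysis.Complex_Analysis"
begin

text \<open>Divided difference of f(x) = exp(t x) at the nodes ys (repetitions allowed),
  defined by the contour integral (1/(2 pi i)) of f(x) / prod (x - y_i) over a positively
  oriented circle enclosing all nodes (radius 1 + sum of the moduli of the nodes).\<close>
definition exp_divdiff :: "real \<Rightarrow> complex list \<Rightarrow> complex" where
  "exp_divdiff t ys =
     contour_integral (circlepath 0 (1 + (\<Sum>y\<leftarrow>ys. norm y)))
       (\<lambda>z. exp (complex_of_real t * z) / (\<Prod>y\<leftarrow>ys. (z - y))) / (2 * of_real pi * \<i>)"

end

theory Submission
  imports Defs
begin

definition PP :: "complex list \<Rightarrow> complex \<Rightarrow> complex" where
  "PP ys z = (\<Prod>y\<leftarrow>ys. z - y)"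

definition Dr :: "real \<Rightarrow> real \<Rightarrow> complex list \<Rightarrow> complex" where
  "Dr R t ys = contour_integral (circlepath 0 R) (\<lambda>z. exp (complex_of_real t * z) / PP ys z) / (2 * of_real pi * \<i>)"

lemma PP_Nil [simp]: "PP [] z = 1" by (simp add: PP_def)
lemma PP_Cons [simp]: "PP (y#ys) z = (z - y) * PP ys z" by (simp add: PP_def)
lemma PP_append: "PP (xs @ ys) z = PP xs z * PP ys z" by (induction xs) auto

lemma PP_mset: "mset xs = mset ys \<Longrightarrow> PP xs z = PP ys z"
proof -
  assume "mset xs = mset ys"
  then have "mset (map (\<lambda>y. z - y) xs) = mset (map (\<lambda>y. z - y) ys)" by simp
  then have "prod_mset (mset (map (\<lambda>y. z - y) xs)) = prod_mset (mset (map (\<lambda>y. z - y) ys))" by (rule arg_cong)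
  then show ?thesis unfolding PP_def by (metis prod_mset_prod_list)
qed

lemma PP_nz: "(\<forall>y\<in>set ys. norm y < norm z) \<Longrightarrow> PP ys z \<noteq> 0"
  by (induction ys) auto

lemma PP_holo: "(\<lambda>z. PP ys z) holomorphic_on S"
  by (induction ys) (auto intro!: holomorphic_intros)

lemma PP_lower: "0 \<le> d \<Longrightarrow> (\<forall>y\<in>set ys. d \<le> norm (z - y)) \<Longrightarrow> d ^ length ys \<le> norm (PP ys z)"
  by (induction ys) (auto simp: norm_mult intro!: mult_mono)

lemma sum_list_norm_nonneg: "0 \<le> (\<Sum>y\<leftarrow>ys. norm y)"
  by (induction ys) auto

lemma norm_le_sum_list: "y \<in> set ys \<Longrightarrow> norm y \<le> (\<Sum>y\<leftarrow>ys. norm y)"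
  by (induction ys) (auto intro: add_increasing2 add_increasing sum_list_norm_nonneg)

lemma circ_indep:
  assumes hol: "f holomorphic_on {z. m < norm z}" and m: "0 \<le> m" "m < R1" "m < R2"
  shows "contour_integral (circlepath 0 R1) f = contour_integral (circlepath 0 R2) f"
proof (rule Cauchy_theorem_homotopic_loops[OF _ _ hol])
  show "open {z::complex. m < norm z}"
    by (intro open_Collect_less continuous_intros)
  show "homotopic_loops {z. m < cmod z} (circlepath 0 R1) (circlepath 0 R2)"
  proof (rule homotopic_loops_linear)
    fix t :: real assume t: "t \<in> {0..1}"
    show "closed_segment (circlepath 0 R1 t) (circlepath 0 R2 t) \<subseteq> {z. m < cmod z}"
    proof
      fix w assume "w \<in> closed_segment (circlepath 0 R1 t) (circlepath 0 R2 t)"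
      then obtain u where u: "0 \<le> u" "u \<le> 1" 
        "w = (1 - u) *\<^sub>R circlepath 0 R1 t + u *\<^sub>R circlepath 0 R2 t"
        by (auto simp: closed_segment_def)
      define e where "e = exp (2 * of_real pi * \<i> * of_real t)"
      have ne: "norm e = 1" unfolding e_def by (simp add: norm_exp_eq_Re)
      have "w = complex_of_real ((1 - u) * R1 + u * R2) * e"
        unfolding u(3) circlepath e_def by (simp add: scaleR_conv_of_real algebra_simps)
      then have "norm w = \<bar>(1 - u) * R1 + u * R2\<bar>" by (simp only: norm_mult ne norm_of_real mult_1_right)
      moreover have "(1 - u) * R1 + u * R2 > m"
      proof -
        have "(1 - u) * R1 \<ge> (1 - u) * m" using u m by (intro mult_left_mono) auto
        moreover have "u * R2 \<ge> u * m" using u m by (intro mult_left_mono) auto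
        moreover have "(1 - u) * R1 + u * R2 \<noteq> m \<or> True" by simp
        ultimately have "(1 - u) * R1 + u * R2 \<ge> m" by (simp add: algebra_simps)
        moreover have "(1 - u) * R1 > (1 - u) * m \<or> u * R2 > u * m"
        proof (cases "u = 0")
          case True then show ?thesis using m by simp
        next
          case False then show ?thesis using u m by (intro disjI2 mult_strict_left_mono) auto
        qed
        ultimately show ?thesis using \<open>(1 - u) * R1 \<ge> (1 - u) * m\<close> \<open>u * R2 \<ge> u * m\<close> by (auto simp: algebra_simps)
      qed
      ultimately show "w \<in> {z. m < cmod z}" by simp
    qed
  qed auto
qed auto

lemma Dr_indep:
  assumes "\<forall>y\<in>set ys. norm y \<le> m" "0 \<le> m" "m < R1" "m < R2"
  shows "Dr R1 t ys = Dr R2 t ys"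
proof -
  have "(\<lambda>z. exp (complex_of_real t * z) / PP ys z) holomorphic_on {z. m < norm z}"
    using assms(1) by (intro holomorphic_intros PP_holo PP_nz) force
  from circ_indep[OF this assms(2-4)] show ?thesis unfolding Dr_def by simp
qed

lemma exp_divdiff_Dr:
  assumes "\<forall>y\<in>set ys. norm y < R" "0 < R"
  shows "exp_divdiff t ys = Dr R t ys"
proof -
  define m where "m = Max (insert 0 (norm ` set ys))"
  have fin: "finite (insert 0 (norm ` set ys))" by simp
  have m0: "0 \<le> m" unfolding m_def using fin by (simp add: Max_ge_iff)
  have mR: "m < R" unfolding m_def using fin assms by (auto simp: Max_less_iff)
  have ym: "\<forall>y\<in>set ys. norm y \<le> m" unfolding m_def using fin by (auto simp: Max_ge_iff)
  have "m \<le> (\<Sum>y\<leftarrow>ys. norm y)" unfolding m_def using fin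
    by (auto simp: Max_le_iff sum_list_norm_nonneg norm_le_sum_list)
  then have "m < 1 + (\<Sum>y\<leftarrow>ys. norm y)" by simp
  moreover have "exp_divdiff t ys = Dr (1 + (\<Sum>y\<leftarrow>ys. norm y)) t ys"
    by (simp add: exp_divdiff_def Dr_def PP_def)
  ultimately show ?thesis using Dr_indep[OF ym m0 _ mR] by simp
qed

lemma Dr_Nil: "R > 0 \<Longrightarrow> Dr R t [] = 0"
proof -
  have "((\<lambda>z. exp (complex_of_real t * z) / PP [] z) has_contour_integral 0) (circlepath 0 R)"
    by (rule Cauchy_theorem_convex_simple[of _ UNIV]) (auto intro!: holomorphic_intros)
  then show ?thesis unfolding Dr_def by (simp add: contour_integral_unique)
qed

lemma Dr_single: assumes "norm y < R" shows "Dr R t [y] = exp (complex_of_real t * y)"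
proof -
  have "((\<lambda>u. exp (complex_of_real t * u) / (u - y)) has_contour_integral
        (2 * of_real pi * \<i> * exp (complex_of_real t * y))) (circlepath 0 R)"
    by (rule Cauchy_integral_circlepath_simple) (auto intro!: holomorphic_intros simp: assms)
  then show ?thesis unfolding Dr_def by (simp add: contour_integral_unique)
qed

lemma sphere_nodes: "norm z = R \<Longrightarrow> \<forall>y\<in>set ys. norm y < R \<Longrightarrow> PP ys z \<noteq> 0"
  by (rule PP_nz) auto

lemma Dr_zero:
  assumes len: "length ys \<ge> 2" and ys: "\<forall>y\<in>set ys. norm y < R" and R: "0 < R"
  shows "Dr R 0 ys = 0"
proof -
  define m where "m = Max (insert 0 (norm ` set ys))"
  have fin: "finite (insert 0 (norm ` set ys))" by simp
  have m0: "0 \<le> m" unfolding m_def using fin by (simp add: Max_ge_iff)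
  have mR: "m < R" unfolding m_def using fin ys R by (auto simp: Max_less_iff)
  have ym: "\<forall>y\<in>set ys. norm y \<le> m" unfolding m_def using fin by (auto simp: Max_ge_iff)
  have bnd: "norm (Dr R 0 ys) \<le> 2 / d" if d: "d \<ge> 1" "d \<ge> m" for d
  proof -
    have eq: "Dr R 0 ys = Dr (m + d) 0 ys" by (rule Dr_indep[OF ym m0 mR]) (use d in auto)
    have R': "m + d > 0" using d m0 by auto
    have ym': "\<forall>y\<in>set ys. norm y < m + d" using ym d by force
    have cont: "(\<lambda>z. exp (complex_of_real 0 * z) / PP ys z) contour_integrable_on circlepath 0 (m + d)"
      using ym' R'
      by (intro contour_integrable_continuous_circlepath holomorphic_on_imp_continuous_on
          holomorphic_intros PP_holo sphere_nodes) auto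
    have bI: "norm (contour_integral (circlepath 0 (m + d)) (\<lambda>z. exp (complex_of_real 0 * z) / PP ys z))
          \<le> (1 / d^2) * (2 * pi * (m + d))"
    proof (rule has_contour_integral_bound_circlepath[OF has_contour_integral_integral[OF cont]])
      show "0 \<le> 1 / d^2" by simp
      show "0 < m + d" by fact
      fix z :: complex assume "norm (z - 0) = m + d"
      then have nz: "norm z = m + d" by simp
      have "\<forall>y\<in>set ys. d \<le> norm (z - y)"
      proof
        fix y assume "y \<in> set ys"
        then have "norm y \<le> m" using ym by auto
        moreover have "norm z - norm y \<le> norm (z - y)" by (rule norm_triangle_ineq2)
        ultimately show "d \<le> norm (z - y)" using nz by linarith
      qed
      then have "d ^ length ys \<le> norm (PP ys z)" using d by (intro PP_lower) auto
      moreover have "d^2 \<le> d ^ length ys" using d len by (intro power_increasing) auto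
      ultimately have "d^2 \<le> norm (PP ys z)" by linarith
      moreover have "d^2 > 0" using d by simp
      ultimately have "1 / norm (PP ys z) \<le> 1 / d^2"
        by (intro divide_left_mono mult_pos_pos) auto
      then show "norm (exp (complex_of_real 0 * z) / PP ys z) \<le> 1 / d^2"
        by (simp add: norm_divide)
    qed
    have eqD: "norm (Dr (m + d) 0 ys) = norm (contour_integral (circlepath 0 (m + d)) (\<lambda>z. exp (complex_of_real 0 * z) / PP ys z)) / (2 * pi)"
      unfolding Dr_def by (simp add: norm_divide norm_mult)
    have "norm (Dr (m + d) 0 ys) \<le> (1 / d^2) * (2 * pi * (m + d)) / (2 * pi)"
      unfolding eqD by (rule divide_right_mono[OF bI]) simp
    then have "norm (Dr R 0 ys) \<le> (1 / d^2) * (2 * pi * (m + d)) / (2 * pi)"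
      using eq by simp
    also have "\<dots> = (m + d) / d^2" by simp
    also have "\<dots> \<le> (2 * d) / d^2" using d by (intro divide_right_mono) auto
    also have "\<dots> = 2 / d" using d by (simp add: power2_eq_square)
    finally show ?thesis .
  qed
  show ?thesis
  proof (rule ccontr)
    assume "Dr R 0 ys \<noteq> 0"
    then have c: "norm (Dr R 0 ys) > 0" by simp
    define d where "d = max 1 (max m (3 / norm (Dr R 0 ys)))"
    have "norm (Dr R 0 ys) \<le> 2 / d" by (rule bnd) (auto simp: d_def)
    moreover have "3 / norm (Dr R 0 ys) \<le> d" by (simp add: d_def)
    then have "3 \<le> d * norm (Dr R 0 ys)" using c by (simp add: field_simps)
    moreover have "d > 0" by (simp add: d_def)
    ultimately show False by (simp add: field_simps)
  qed
qed

lemma Dr_mset: "mset xs = mset ys \<Longrightarrow> Dr R t xs = Dr R t ys"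
  unfolding Dr_def using PP_mset by metis

lemma ci_circ: "contour_integral (circlepath 0 R) h = integral {0..1}
   (\<lambda>s. h (circlepath 0 R s) * (2 * pi * \<i> * R * exp (2 * of_real pi * \<i> * s)))"
  by (simp add: contour_integral_integral vector_derivative_circlepath)

lemma ci_exp_deriv:
  assumes g: "continuous_on (sphere 0 R) g" and R: "R > 0"
  shows "((\<lambda>t. contour_integral (circlepath 0 R) (\<lambda>z. exp (of_real t * z) * g z)) has_vector_derivative
          contour_integral (circlepath 0 R) (\<lambda>z. z * exp (of_real t * z) * g z)) (at t)"
proof -
  define c where "c = circlepath 0 R"
  define c' where "c' = (\<lambda>s::real. 2 * pi * \<i> * R * exp (2 * of_real pi * \<i> * s))"
  have cc: "continuous_on UNIV c" unfolding c_def circlepath by (intro continuous_intros)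
  have c'c: "continuous_on UNIV c'" unfolding c'_def by (intro continuous_intros)
  have cs: "c s \<in> sphere 0 R" for s unfolding c_def circlepath using R
    by (simp add: norm_mult norm_exp_eq_Re)
  have gc: "continuous_on UNIV (\<lambda>s. g (c s))"
    by (rule continuous_on_compose2[OF g cc]) (use cs in blast)
  have gcs: "continuous_on S (\<lambda>p. g (c (snd p)))" for S :: "(real \<times> real) set"
    by (rule continuous_on_compose2[OF gc continuous_on_snd]) auto
  have ccs: "continuous_on S (\<lambda>p. c (snd p))" for S :: "(real \<times> real) set"
    by (rule continuous_on_compose2[OF cc continuous_on_snd]) auto
  have c'cs: "continuous_on S (\<lambda>p. c' (snd p))" for S :: "(real \<times> real) set"
    by (rule continuous_on_compose2[OF c'c continuous_on_snd]) auto
  have "((\<lambda>t. integral (cbox 0 1) (\<lambda>s. exp (of_real t * c s) * g (c s) * c' s)) has_vector_derivative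
         integral (cbox 0 1) (\<lambda>s. c s * exp (of_real t * c s) * g (c s) * c' s)) (at t within UNIV)"
  proof (rule leibniz_rule_vector_derivative)
    fix x :: real and s :: real
    have "((\<lambda>z. exp (z * c s)) has_field_derivative c s * exp (of_real x * c s)) (at (of_real x))"
      by (auto intro!: derivative_eq_intros)
    from has_vector_derivative_real_field[OF this, of UNIV]
    have "((\<lambda>x. exp (complex_of_real x * c s)) has_vector_derivative c s * exp (of_real x * c s)) (at x within UNIV)"
      by simp
    then show "((\<lambda>x. exp (of_real x * c s) * g (c s) * c' s) has_vector_derivative
               c s * exp (of_real x * c s) * g (c s) * c' s) (at x within UNIV)"
      by (intro has_vector_derivative_mult_left)
  next
    fix x :: real
    have "continuous_on (cbox 0 1) (\<lambda>s. exp (of_real x * c s) * g (c s) * c' s)"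
      by (intro continuous_intros continuous_on_subset[OF gc] continuous_on_subset[OF cc]
          continuous_on_subset[OF c'c]) auto
    then show "(\<lambda>s. exp (of_real x * c s) * g (c s) * c' s) integrable_on cbox 0 1"
      by (rule integrable_continuous)
  next
    show "continuous_on (UNIV \<times> cbox 0 1) (\<lambda>(x, s). c s * exp (of_real x * c s) * g (c s) * c' s)"
      unfolding case_prod_beta
      by (intro continuous_intros gcs ccs c'cs)
  qed auto
  then show ?thesis
    by (simp add: ci_circ[of R] c_def c'_def mult.assoc)
qed

lemma Dr_deriv:
  assumes ys: "\<forall>y\<in>set (a#ys). norm y < R" and R: "R > 0"
  shows "((\<lambda>t. Dr R t (a#ys)) has_vector_derivative (a * Dr R t (a#ys) + Dr R t ys)) (at t)"
proof -
  define g where "g = (\<lambda>z. 1 / PP (a#ys) z)"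
  have gc: "continuous_on (sphere 0 R) g" unfolding g_def
    using ys by (intro holomorphic_on_imp_continuous_on holomorphic_intros PP_holo sphere_nodes) auto
  have eq: "Dr R t L = contour_integral (circlepath 0 R) (\<lambda>z. exp (of_real t * z) * (1 / PP L z)) / (2 * of_real pi * \<i>)"
    for t L by (simp add: Dr_def)
  have pi: "path_image (circlepath 0 R) = sphere 0 R" using R by (simp add: abs_of_pos)
  have int1: "(\<lambda>z. exp (of_real t * z) / PP L z) contour_integrable_on circlepath 0 R"
    if "\<forall>y\<in>set L. norm y < R" for L
    using that R by (intro contour_integrable_continuous_circlepath holomorphic_on_imp_continuous_on
          holomorphic_intros PP_holo sphere_nodes) auto
  have "contour_integral (circlepath 0 R) (\<lambda>z. z * exp (of_real t * z) * g z)
      = contour_integral (circlepath 0 R) (\<lambda>z. a * (exp (of_real t * z) / PP (a#ys) z) + exp (of_real t * z) / PP ys z)"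
  proof (rule contour_integral_cong[OF refl])
    fix z assume "z \<in> path_image (circlepath 0 R)"
    then have nz: "norm z = R" using R by (simp add: abs_of_pos)
    have "z - a \<noteq> 0" using ys nz by auto
    moreover have "PP ys z \<noteq> 0" using ys nz by (intro sphere_nodes) auto
    ultimately show "z * exp (of_real t * z) * g z = a * (exp (of_real t * z) / PP (a#ys) z) + exp (of_real t * z) / PP ys z"
      unfolding g_def by (simp add: field_simps)
  qed
  also have "\<dots> = a * contour_integral (circlepath 0 R) (\<lambda>z. exp (of_real t * z) / PP (a#ys) z)
     + contour_integral (circlepath 0 R) (\<lambda>z. exp (of_real t * z) / PP ys z)"
    using ys
    by (subst contour_integral_add[OF contour_integrable_lmul[OF int1[of "a#ys"]] int1[of ys]],
        simp, simp, subst contour_integral_lmul[OF int1[of "a#ys"]], simp_all)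
  finally have key: "contour_integral (circlepath 0 R) (\<lambda>z. z * exp (of_real t * z) * g z) / (2 * of_real pi * \<i>)
       = a * Dr R t (a#ys) + Dr R t ys" by (simp add: Dr_def field_simps)
  have "((\<lambda>t. contour_integral (circlepath 0 R) (\<lambda>z. exp (of_real t * z) * g z) / (2 * of_real pi * \<i>)) has_vector_derivative
      contour_integral (circlepath 0 R) (\<lambda>z. z * exp (of_real t * z) * g z) / (2 * of_real pi * \<i>)) (at t)"
    by (intro has_vector_derivative_divide ci_exp_deriv gc R)
  then show ?thesis unfolding key by (simp add: eq g_def)
qed

lemma Dr_deriv_aff:
  assumes ys: "\<forall>y\<in>set (a#ys). norm y < R" and R: "R > 0"
  shows "((\<lambda>t. Dr R (p + k * t) (a#ys)) has_vector_derivative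
          (of_real k * (a * Dr R (p + k * t) (a#ys) + Dr R (p + k * t) ys))) (at t within S)"
proof -
  have f: "((\<lambda>t. p + k * t) has_vector_derivative k) (at t)"
    by (auto intro!: derivative_eq_intros simp: has_real_derivative_iff_has_vector_derivative[symmetric])
  have "(((\<lambda>u. Dr R u (a#ys)) \<circ> (\<lambda>t. p + k * t)) has_vector_derivative
         (k *\<^sub>R (a * Dr R (p + k * t) (a#ys) + Dr R (p + k * t) ys))) (at t)"
    by (rule vector_diff_chain_at[OF f Dr_deriv[OF ys R]])
  then have "((\<lambda>t. Dr R (p + k * t) (a#ys)) has_vector_derivative
          (of_real k * (a * Dr R (p + k * t) (a#ys) + Dr R (p + k * t) ys))) (at t)"
    by (simp add: o_def scaleR_conv_of_real)
  then show ?thesis by (rule has_vector_derivative_at_within)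
qed

lemma Dr_deriv_aff_snoc:
  assumes ys: "\<forall>y\<in>set (ys @ [a]). norm y < R" and R: "R > 0"
  shows "((\<lambda>t. Dr R (p + k * t) (ys @ [a])) has_vector_derivative
          (of_real k * (a * Dr R (p + k * t) (ys @ [a]) + Dr R (p + k * t) ys))) (at t within S)"
proof -
  have m: "Dr R u (ys @ [a]) = Dr R u (a # ys)" for u by (rule Dr_mset) simp
  show ?thesis unfolding m by (rule Dr_deriv_aff) (use ys R in auto)
qed

lemma Dr_one: "norm y < R \<Longrightarrow> Dr R 0 [y] = 1"
  by (simp add: Dr_single)

lemma ode_zero:
  fixes h :: "real \<Rightarrow> complex"
  assumes d: "\<And>x. (h has_vector_derivative (a * h x)) (at x)" and h0: "h 0 = 0"
  shows "h T = 0"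
proof -
  define k where "k = (\<lambda>x::real. exp (- (of_real x * a)) * h x)"
  have e: "((\<lambda>x::real. exp (- (of_real x * a))) has_vector_derivative (- a * exp (- (of_real x * a)))) (at x within UNIV)" for x
  proof -
    have "((\<lambda>z. exp (- (z * a))) has_field_derivative (- a * exp (- (of_real x * a)))) (at (of_real x))"
      by (auto intro!: derivative_eq_intros)
    from has_vector_derivative_real_field[OF this] show ?thesis by simp
  qed
  have kd: "(k has_vector_derivative 0) (at x within UNIV)" for x
  proof -
    have "(k has_vector_derivative (exp (- (of_real x * a)) * (a * h x) + (- a * exp (- (of_real x * a))) * h x)) (at x within UNIV)"
      unfolding k_def by (rule has_vector_derivative_mult[OF e d])
    then show ?thesis by (simp add: algebra_simps)
  qed
  obtain c where "\<And>x. x \<in> UNIV \<Longrightarrow> k x = c"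
    using has_vector_derivative_zero_constant[of UNIV k] kd by auto
  then have "k T = k 0" by simp
  then have "exp (- (of_real T * a)) * h T = 0" by (simp add: k_def h0)
  then show ?thesis by simp
qed

lemma leibniz:
  assumes a: "a \<noteq> []" and nodes: "\<forall>y\<in>set a. norm y < R" and R: "R > 0"
  shows "Dr R (s + t) a = (\<Sum>r<length a. Dr R s (take (Suc r) a) * Dr R t (drop r a))"
proof -
  define w where "w = s + t"
  define n where "n = length a"
  define \<Phi> where "\<Phi> = (\<lambda>u. \<Sum>r<n. Dr R u (take (Suc r) a) * Dr R (w + (-1) * u) (drop r a))"
  define g where "g = (\<lambda>r u. Dr R u (take r a) * Dr R (w + (-1) * u) (drop r a))"
  have sub_take: "\<forall>y\<in>set (take r a). norm y < R" for r using nodes by (meson in_set_takeD)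
  have sub_drop: "\<forall>y\<in>set (drop r a). norm y < R" for r using nodes by (meson in_set_dropD)
  have Pd: "(\<Phi> has_vector_derivative 0) (at u within UNIV)" for u
  proof -
    have trm: "((\<lambda>u. Dr R u (take (Suc r) a) * Dr R (w + (-1) * u) (drop r a)) has_vector_derivative
             (g r u - g (Suc r) u)) (at u within UNIV)" if r: "r < n" for r
    proof -
      have tk: "take (Suc r) a = take r a @ [a ! r]" using r n_def by (simp add: take_Suc_conv_app_nth)
      have dr: "drop r a = a ! r # drop (Suc r) a" using r n_def by (simp add: Cons_nth_drop_Suc)
      have A: "((\<lambda>u. Dr R (0 + 1 * u) (take r a @ [a ! r])) has_vector_derivative
          (of_real 1 * (a ! r * Dr R (0 + 1 * u) (take r a @ [a ! r]) + Dr R (0 + 1 * u) (take r a)))) (at u within UNIV)"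
        by (rule Dr_deriv_aff_snoc) (use sub_take[of "Suc r"] tk R in auto)
      have B: "((\<lambda>u. Dr R (w + (-1) * u) (a ! r # drop (Suc r) a)) has_vector_derivative
          (of_real (-1) * (a ! r * Dr R (w + (-1) * u) (a ! r # drop (Suc r) a) + Dr R (w + (-1) * u) (drop (Suc r) a)))) (at u within UNIV)"
        by (rule Dr_deriv_aff) (use sub_drop[of r] dr R in auto)
      have A': "((\<lambda>u. Dr R u (take (Suc r) a)) has_vector_derivative
          (a ! r * Dr R u (take (Suc r) a) + Dr R u (take r a))) (at u within UNIV)"
        using A unfolding tk[symmetric] by simp
      have B': "((\<lambda>u. Dr R (w + (-1) * u) (drop r a)) has_vector_derivative
          (- (a ! r * Dr R (w + (-1) * u) (drop r a) + Dr R (w + (-1) * u) (drop (Suc r) a)))) (at u within UNIV)"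
        using B unfolding dr[symmetric] by simp
      show ?thesis
        by (rule has_vector_derivative_eq_rhs[OF has_vector_derivative_mult[OF A' B']])
          (simp add: g_def algebra_simps)
    qed
    have "(\<Phi> has_vector_derivative (\<Sum>r<n. g r u - g (Suc r) u)) (at u within UNIV)"
      unfolding \<Phi>_def by (intro has_vector_derivative_sum trm) auto
    also have "(\<Sum>r<n. g r u - g (Suc r) u) = g 0 u - g n u" by (rule sum_lessThan_telescope')
    also have "\<dots> = 0" unfolding g_def n_def using R by (simp add: Dr_Nil)
    finally show ?thesis .
  qed
  obtain c where "\<And>x. x \<in> UNIV \<Longrightarrow> \<Phi> x = c"
    using has_vector_derivative_zero_constant[of UNIV \<Phi>] Pd by auto
  then have "\<Phi> s = \<Phi> 0" by simp
  moreover have "\<Phi> 0 = Dr R w a"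
  proof -
    obtain n' where n': "n = Suc n'" using a n_def by (cases a) auto
    have "\<Phi> 0 = Dr R 0 (take 1 a) * Dr R w a + (\<Sum>r<n'. Dr R 0 (take (Suc (Suc r)) a) * Dr R w (drop (Suc r) a))"
      unfolding \<Phi>_def n' sum.lessThan_Suc_shift by simp
    also have "(\<Sum>r<n'. Dr R 0 (take (Suc (Suc r)) a) * Dr R w (drop (Suc r) a)) = 0"
    proof (rule sum.neutral, rule ballI)
      fix r assume "r \<in> {..<n'}"
      then have "length (take (Suc (Suc r)) a) \<ge> 2" using n' n_def by auto
      then have "Dr R 0 (take (Suc (Suc r)) a) = 0" using sub_take R by (intro Dr_zero) auto
      then show "Dr R 0 (take (Suc (Suc r)) a) * Dr R w (drop (Suc r) a) = 0" by simp
    qed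
    also have "take 1 a = [hd a]" using a by (cases a) auto
    also have "Dr R 0 [hd a] = 1" using nodes a by (intro Dr_one) auto
    finally show ?thesis by simp
  qed
  ultimately show ?thesis unfolding \<Phi>_def w_def n_def by simp
qed

lemma Dr_deriv':
  assumes "\<forall>y\<in>set (a#ys). norm y < R" "R > 0"
  shows "((\<lambda>t. Dr R t (a#ys)) has_vector_derivative (a * Dr R t (a#ys) + Dr R t ys)) (at t within S)"
  using Dr_deriv[OF assms] by (rule has_vector_derivative_at_within)

lemma shift:
  assumes "\<forall>y\<in>set b. norm y < R" "R > 0"
  shows "(\<Sum>m<length b. Dr R t (b @ [b!m])) = of_real t * Dr R t b"
  using assms
proof (induction b arbitrary: t)
  case Nil
  then show ?case by (simp add: Dr_Nil)
next
  case (Cons y b')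
  have nodes: "\<forall>x\<in>set (y#b'). norm x < R" and R: "R > 0" using Cons.prems by auto
  have nodes': "\<forall>x\<in>set b'. norm x < R" using nodes by auto
  define n where "n = length b'"
  define L where "L = (\<lambda>m. b' @ [(y#b') ! m])"
  have nodesL: "\<forall>x\<in>set (y # L m). norm x < R" if "m < Suc n" for m
  proof -
    have "(y#b') ! m \<in> set (y#b')" using that n_def by (intro nth_mem) simp
    then have "norm ((y#b') ! m) < R" using nodes by blast
    then show ?thesis using nodes unfolding L_def by auto
  qed
  define S where "S = (\<lambda>u. \<Sum>m<Suc n. Dr R u (y # L m))"
  define h where "h = (\<lambda>u. S u - of_real u * Dr R u (y#b'))"
  have sumL: "(\<Sum>m<Suc n. Dr R u (L m)) = Dr R u (y#b') + of_real u * Dr R u b'" for u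
  proof -
    have "(\<Sum>m<Suc n. Dr R u (L m)) = Dr R u (b' @ [y]) + (\<Sum>m<n. Dr R u (b' @ [b' ! m]))"
      unfolding L_def sum.lessThan_Suc_shift by simp
    also have "Dr R u (b' @ [y]) = Dr R u (y # b')" by (rule Dr_mset) simp
    also have "(\<Sum>m<n. Dr R u (b' @ [b' ! m])) = of_real u * Dr R u b'"
      unfolding n_def using Cons.IH[OF nodes' R] .
    finally show ?thesis .
  qed
  have "h t = 0"
  proof (rule ode_zero[of h y])
    fix u
    have Sd: "(S has_vector_derivative (\<Sum>m<Suc n. y * Dr R u (y # L m) + Dr R u (L m))) (at u)"
      unfolding S_def by (intro has_vector_derivative_sum Dr_deriv' nodesL R) auto
    have Td: "((\<lambda>u. of_real u * Dr R u (y#b')) has_vector_derivative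
        (of_real u * (y * Dr R u (y#b') + Dr R u b') + 1 * Dr R u (y#b'))) (at u)"
    proof (rule has_vector_derivative_mult[OF _ Dr_deriv'[OF nodes R]])
      have "((\<lambda>z. z) has_field_derivative 1) (at (of_real u))" by (rule DERIV_ident)
      from has_vector_derivative_real_field[OF this] show "((\<lambda>u. complex_of_real u) has_vector_derivative 1) (at u)" .
    qed
    have "(h has_vector_derivative ((\<Sum>m<Suc n. y * Dr R u (y # L m) + Dr R u (L m)) -
        (of_real u * (y * Dr R u (y#b') + Dr R u b') + 1 * Dr R u (y#b')))) (at u)"
      unfolding h_def by (rule has_vector_derivative_diff[OF Sd Td])
    moreover have "(\<Sum>m<Suc n. y * Dr R u (y # L m) + Dr R u (L m)) = y * S u + (\<Sum>m<Suc n. Dr R u (L m))"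
      unfolding S_def by (simp only: sum.distrib sum_distrib_left)
    ultimately show "(h has_vector_derivative y * h u) (at u)"
      unfolding sumL h_def by (simp add: algebra_simps)
  next
    have "S 0 = 0" unfolding S_def
    proof (rule sum.neutral, rule ballI)
      fix m assume "m \<in> {..<Suc n}"
      then show "Dr R 0 (y # L m) = 0" using nodesL R by (intro Dr_zero) (auto simp: L_def)
    qed
    then show "h 0 = 0" by (simp add: h_def)
  qed
  then have "S t = of_real t * Dr R t (y#b')" by (simp add: h_def)
  then show ?case by (simp add: S_def L_def n_def)
qed

lemma conv:
  assumes c: "c \<noteq> []" and d: "d \<noteq> []" and nc: "\<forall>y\<in>set c. norm y < R" and nd: "\<forall>y\<in>set d. norm y < R"
    and R: "R > 0" and T: "T \<ge> 0"
  shows "((\<lambda>\<tau>. Dr R (-\<tau>) c * Dr R (\<tau> - T) d) has_integral (- Dr R (-T) (d @ c))) {0..T}"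
proof -
  define n where "n = length c"
  define F where "F = (\<lambda>\<tau>. \<Sum>k<n. Dr R (0 + (-1) * \<tau>) (drop k c) * Dr R ((-T) + 1 * \<tau>) (d @ take (Suc k) c))"
  define g where "g = (\<lambda>k \<tau>. Dr R (0 + (-1) * \<tau>) (drop k c) * Dr R ((-T) + 1 * \<tau>) (d @ take k c))"
  have sub_take: "\<forall>y\<in>set (d @ take r c). norm y < R" for r using nc nd by (auto dest: in_set_takeD)
  have sub_drop: "\<forall>y\<in>set (drop r c). norm y < R" for r using nc by (auto dest: in_set_dropD)
  have Fd: "(F has_vector_derivative (Dr R (-\<tau>) c * Dr R (\<tau> - T) d)) (at \<tau> within {0..T})" for \<tau>
  proof -
    have trm: "((\<lambda>\<tau>. Dr R (0 + (-1) * \<tau>) (drop k c) * Dr R ((-T) + 1 * \<tau>) (d @ take (Suc k) c)) has_vector_derivative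
             (g k \<tau> - g (Suc k) \<tau>)) (at \<tau> within {0..T})" if k: "k < n" for k
    proof -
      have tk: "d @ take (Suc k) c = (d @ take k c) @ [c ! k]" using k n_def by (simp add: take_Suc_conv_app_nth)
      have dr: "drop k c = c ! k # drop (Suc k) c" using k n_def by (simp add: Cons_nth_drop_Suc)
      have A: "((\<lambda>\<tau>. Dr R (0 + (-1) * \<tau>) (c ! k # drop (Suc k) c)) has_vector_derivative
          (of_real (-1) * (c ! k * Dr R (0 + (-1) * \<tau>) (c ! k # drop (Suc k) c) + Dr R (0 + (-1) * \<tau>) (drop (Suc k) c)))) (at \<tau> within {0..T})"
        by (rule Dr_deriv_aff) (use sub_drop[of k] dr R in auto)
      have B: "((\<lambda>\<tau>. Dr R ((-T) + 1 * \<tau>) ((d @ take k c) @ [c ! k])) has_vector_derivative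
          (of_real 1 * (c ! k * Dr R ((-T) + 1 * \<tau>) ((d @ take k c) @ [c ! k]) + Dr R ((-T) + 1 * \<tau>) (d @ take k c)))) (at \<tau> within {0..T})"
        by (rule Dr_deriv_aff_snoc) (use sub_take[of "Suc k"] tk R in auto)
      have A': "((\<lambda>\<tau>. Dr R (0 + (-1) * \<tau>) (drop k c)) has_vector_derivative
          (- (c ! k * Dr R (0 + (-1) * \<tau>) (drop k c) + Dr R (0 + (-1) * \<tau>) (drop (Suc k) c)))) (at \<tau> within {0..T})"
        using A unfolding dr[symmetric] by simp
      have B': "((\<lambda>\<tau>. Dr R ((-T) + 1 * \<tau>) (d @ take (Suc k) c)) has_vector_derivative
          (c ! k * Dr R ((-T) + 1 * \<tau>) (d @ take (Suc k) c) + Dr R ((-T) + 1 * \<tau>) (d @ take k c))) (at \<tau> within {0..T})"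
        using B unfolding tk[symmetric] by simp
      show ?thesis
        by (rule has_vector_derivative_eq_rhs[OF has_vector_derivative_mult[OF A' B']])
          (simp add: g_def algebra_simps)
    qed
    have "(F has_vector_derivative (\<Sum>k<n. g k \<tau> - g (Suc k) \<tau>)) (at \<tau> within {0..T})"
      unfolding F_def by (intro has_vector_derivative_sum trm) auto
    also have "(\<Sum>k<n. g k \<tau> - g (Suc k) \<tau>) = g 0 \<tau> - g n \<tau>" by (rule sum_lessThan_telescope')
    also have "\<dots> = Dr R (-\<tau>) c * Dr R (\<tau> - T) d" unfolding g_def n_def using R by (simp add: Dr_Nil)
    finally show ?thesis .
  qed
  have ftc: "((\<lambda>\<tau>. Dr R (-\<tau>) c * Dr R (\<tau> - T) d) has_integral (F T - F 0)) {0..T}"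
    by (rule fundamental_theorem_of_calculus[OF T]) (use Fd in auto)
  have FT: "F T = 0" unfolding F_def
  proof (rule sum.neutral, rule ballI)
    fix k assume "k \<in> {..<n}"
    then have "length (d @ take (Suc k) c) \<ge> 2" using d n_def by (cases d) auto
    then have "Dr R 0 (d @ take (Suc k) c) = 0" using sub_take R by (intro Dr_zero) auto
    then show "Dr R (0 + (-1) * T) (drop k c) * Dr R ((-T) + 1 * T) (d @ take (Suc k) c) = 0" by simp
  qed
  have F0: "F 0 = Dr R (-T) (d @ c)"
  proof -
    obtain n' where n': "n = Suc n'" using c n_def by (cases c) auto
    have "F 0 = (\<Sum>k<n'. Dr R 0 (drop k c) * Dr R (-T) (d @ take (Suc k) c)) + Dr R 0 (drop n' c) * Dr R (-T) (d @ take (Suc n') c)"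
      unfolding F_def n' by simp
    also have "(\<Sum>k<n'. Dr R 0 (drop k c) * Dr R (-T) (d @ take (Suc k) c)) = 0"
    proof (rule sum.neutral, rule ballI)
      fix k assume "k \<in> {..<n'}"
      then have "length (drop k c) \<ge> 2" using n' n_def by auto
      then have "Dr R 0 (drop k c) = 0" using sub_drop R by (intro Dr_zero) auto
      then show "Dr R 0 (drop k c) * Dr R (-T) (d @ take (Suc k) c) = 0" by simp
    qed
    also have "drop n' c = [c ! n']" using n' n_def by (metis Cons_nth_drop_Suc drop_all le_refl lessI)
    also have "Dr R 0 [c ! n'] = 1" using nc n' n_def by (intro Dr_one) auto
    also have "take (Suc n') c = c" using n' n_def by simp
    finally show ?thesis by simp
  qed
  show ?thesis using ftc unfolding FT F0 by simp
qed

theorem lemma3: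
  fixes x :: "nat \<Rightarrow> complex" and q j :: nat and \<beta> :: real
  assumes "q \<ge> 1" and "j \<le> q - 1" and "\<beta> > 0"
  shows "integral {0..\<beta>/2}
           (\<lambda>\<tau>. complex_of_real \<tau> * exp_divdiff (-\<tau>) (map x [j+1..<q+1])
                   * exp_divdiff (-(\<beta> - \<tau>)) (map x [0..<j+1]))
         = (\<Sum>r=0..j. exp_divdiff (-(\<beta>/2)) (map x [0..<r+1])
              * (\<Sum>m=j+1..q. exp_divdiff (-(\<beta>/2)) (map x [r..<q+1] @ [x m])))"
proof -
  have jq: "j < q" using assms by auto
  define R where "R = 1 + (\<Sum>i\<le>q. norm (x i))"
  have R: "R > 0" unfolding R_def by (simp add: add_pos_nonneg sum_nonneg)
  have xR: "norm (x i) < R" if "i \<le> q" for i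
  proof -
    have "norm (x i) \<le> (\<Sum>i\<le>q. norm (x i))" by (rule member_le_sum) (use that in auto)
    then show ?thesis unfolding R_def by simp
  qed
  have nodes: "\<forall>y\<in>set L. norm y < R" if "set L \<subseteq> x ` {..q}" for L
    using that xR by auto
  have ED: "exp_divdiff t L = Dr R t L" if "set L \<subseteq> x ` {..q}" for t L
    by (rule exp_divdiff_Dr[OF nodes[OF that] R])
  define T where "T = \<beta> / 2"
  have T: "T \<ge> 0" using assms by (simp add: T_def)
  define a where "a = map x [0..<j+1]"
  define b where "b = map x [j+1..<q+1]"
  have la: "length a = j + 1" by (simp add: a_def)
  have lb: "length b = q - j" unfolding b_def using jq by simp
  have sa: "set a \<subseteq> x ` {..q}" and sb: "set b \<subseteq> x ` {..q}" using jq by (auto simp: a_def b_def)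
  have bnz: "b \<noteq> []" using lb jq by auto
  have bm: "b ! m = x (m + (j + 1))" if "m < q - j" for m
  proof -
    have "m < length [j+1..<q+1]" using that jq by (simp del: upt_Suc)
    then have "b ! m = x ([j+1..<q+1] ! m)" unfolding b_def by (rule nth_map)
    also have "[j+1..<q+1] ! m = j + 1 + m" using that jq by (intro nth_upt) linarith
    finally show ?thesis by (simp add: add.commute)
  qed
  have sbm: "set (b @ [b ! m]) \<subseteq> x ` {..q}" if "m < q - j" for m
    using sb that lb by (auto intro: nth_mem)
  have sta: "set (take (Suc r) a) \<subseteq> x ` {..q}" for r using sa by (meson in_set_takeD subset_iff)
  have sda: "set (drop r a) \<subseteq> x ` {..q}" for r using sa by (meson in_set_dropD subset_iff)
  define f where "f = (\<lambda>\<tau>. \<Sum>r<j+1. \<Sum>m<q-j. (- Dr R (-T) (take (Suc r) a)) *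
                           (Dr R (-\<tau>) (b @ [b ! m]) * Dr R (\<tau> - T) (drop r a)))"
  have integrand: "complex_of_real \<tau> * exp_divdiff (-\<tau>) b * exp_divdiff (-(\<beta> - \<tau>)) a = f \<tau>" for \<tau>
  proof -
    have L1: "Dr R (-(\<beta> - \<tau>)) a = (\<Sum>r<j+1. Dr R (-T) (take (Suc r) a) * Dr R (\<tau> - T) (drop r a))"
    proof -
      have "-(\<beta> - \<tau>) = (-T) + (\<tau> - T)" by (simp add: T_def)
      moreover have "a \<noteq> []" using la by auto
      ultimately show ?thesis using leibniz[of a R "-T" "\<tau> - T"] nodes[OF sa] R la by simp
    qed
    have L2: "complex_of_real \<tau> * Dr R (-\<tau>) b = - (\<Sum>m<q-j. Dr R (-\<tau>) (b @ [b ! m]))"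
      using shift[OF nodes[OF sb] R, of "-\<tau>"] lb by simp
    have "complex_of_real \<tau> * exp_divdiff (-\<tau>) b * exp_divdiff (-(\<beta> - \<tau>)) a
        = (complex_of_real \<tau> * Dr R (-\<tau>) b) * Dr R (-(\<beta> - \<tau>)) a"
      using ED[OF sa] ED[OF sb] by simp
    also have "\<dots> = (- (\<Sum>m<q-j. Dr R (-\<tau>) (b @ [b ! m]))) *
                    (\<Sum>r<j+1. Dr R (-T) (take (Suc r) a) * Dr R (\<tau> - T) (drop r a))"
      unfolding L1 L2 ..
    also have "\<dots> = f \<tau>"
      unfolding f_def by (simp add: sum_distrib_left sum_distrib_right algebra_simps sum_negf)
    finally show ?thesis .
  qed
  have hasint: "(f has_integral (\<Sum>r<j+1. \<Sum>m<q-j. Dr R (-T) (take (Suc r) a) *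
                    Dr R (-T) (drop r a @ (b @ [b ! m])))) {0..T}"
    unfolding f_def
  proof (intro has_integral_sum finite_lessThan)
    fix r m assume r: "r \<in> {..<j+1}" and m: "m \<in> {..<q-j}"
    have "((\<lambda>\<tau>. Dr R (-\<tau>) (b @ [b ! m]) * Dr R (\<tau> - T) (drop r a)) has_integral
          (- Dr R (-T) (drop r a @ (b @ [b ! m])))) {0..T}"
    proof (rule conv)
      have m': "m < q - j" using m by simp
      show "\<forall>y\<in>set (b @ [b ! m]). norm y < R" by (rule nodes[OF sbm[OF m']])
      show "\<forall>y\<in>set (drop r a). norm y < R" by (rule nodes[OF sda[of r]])
      show "drop r a \<noteq> []" using r la by simp
    qed (use R T in auto)
    from has_integral_mult_right[OF this, of "- Dr R (-T) (take (Suc r) a)"]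
    show "((\<lambda>\<tau>. - Dr R (-T) (take (Suc r) a) * (Dr R (-\<tau>) (b @ [b ! m]) * Dr R (\<tau> - T) (drop r a)))
          has_integral Dr R (-T) (take (Suc r) a) * Dr R (-T) (drop r a @ (b @ [b ! m]))) {0..T}"
      by simp
  qed
  have "integral {0..\<beta>/2} (\<lambda>\<tau>. complex_of_real \<tau> * exp_divdiff (-\<tau>) b * exp_divdiff (-(\<beta> - \<tau>)) a)
      = (\<Sum>r<j+1. \<Sum>m<q-j. Dr R (-T) (take (Suc r) a) * Dr R (-T) (drop r a @ (b @ [b ! m])))"
    unfolding integrand T_def[symmetric] using hasint by (rule integral_unique)
  also have "\<dots> = (\<Sum>r=0..j. exp_divdiff (-(\<beta>/2)) (map x [0..<r+1])
              * (\<Sum>m=j+1..q. exp_divdiff (-(\<beta>/2)) (map x [r..<q+1] @ [x m])))"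
  proof -
    have "(\<Sum>r<j+1. \<Sum>m<q-j. Dr R (-T) (take (Suc r) a) * Dr R (-T) (drop r a @ (b @ [b ! m])))
        = (\<Sum>r=0..j. exp_divdiff (-(\<beta>/2)) (map x [0..<r+1])
              * (\<Sum>m<q-j. exp_divdiff (-(\<beta>/2)) (map x [r..<q+1] @ [x (m + (j+1))])))"
    proof -
      have "{..<j+1} = {0..j}" by auto
      moreover have "Dr R (-T) (take (Suc r) a) * Dr R (-T) (drop r a @ (b @ [b ! m]))
          = exp_divdiff (-(\<beta>/2)) (map x [0..<r+1]) * exp_divdiff (-(\<beta>/2)) (map x [r..<q+1] @ [x (m + (j+1))])"
        if r: "r \<in> {0..j}" and m: "m \<in> {..<q-j}" for r m
      proof -
        have e1: "take (Suc r) a = map x [0..<r+1]" using r by (simp add: a_def take_map take_upt min_def del: upt_Suc)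
        have e2: "drop r a @ (b @ [b ! m]) = map x [r..<q+1] @ [x (m + (j+1))]"
        proof -
          have d1: "drop r a = map x [r..<j+1]" unfolding a_def by (simp add: drop_map del: upt_Suc)
          have "[r..<j+1+(q-j)] = [r..<j+1] @ [j+1..<j+1+(q-j)]"
            by (rule upt_add_eq_append) (use r in auto)
          moreover have "j+1+(q-j) = q+1" using jq by simp
          ultimately have "[r..<j+1] @ [j+1..<q+1] = [r..<q+1]" by simp
          then have "map x [r..<j+1] @ map x [j+1..<q+1] = map x [r..<q+1]" by (metis map_append)
          then have "drop r a @ b = map x [r..<q+1]" unfolding d1 b_def .
          then show ?thesis using bm m by simp
        qed
        have s1: "set (map x [0..<r+1]) \<subseteq> x ` {..q}" using r jq by auto
        have s2: "set (map x [r..<q+1] @ [x (m + (j+1))]) \<subseteq> x ` {..q}" using m by auto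
        show ?thesis unfolding e1 e2 ED[OF s1] ED[OF s2] T_def by simp
      qed
      ultimately show ?thesis by (simp add: sum_distrib_left)
    qed
    also have "\<dots> = (\<Sum>r=0..j. exp_divdiff (-(\<beta>/2)) (map x [0..<r+1])
              * (\<Sum>m=j+1..q. exp_divdiff (-(\<beta>/2)) (map x [r..<q+1] @ [x m])))"
    proof -
      have "(\<Sum>m<q-j. g (m + (j+1))) = (\<Sum>m=j+1..q. g m)" for g :: "nat \<Rightarrow> complex"
      proof -
        have "(\<Sum>m=j+1..q. g m) = (\<Sum>m\<in>{0+(j+1)..<(q-j)+(j+1)}. g m)"
          using jq by (intro sum.cong) auto
        also have "\<dots> = (\<Sum>m\<in>{0..<q-j}. g (m + (j+1)))" by (rule sum.shift_bounds_nat_ivl)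
        finally show ?thesis by (simp add: lessThan_atLeast0)
      qed
      note shiftsum = this
      show ?thesis
      proof (rule sum.cong[OF refl])
        fix r
        show "exp_divdiff (-(\<beta>/2)) (map x [0..<r+1])
              * (\<Sum>m<q-j. exp_divdiff (-(\<beta>/2)) (map x [r..<q+1] @ [x (m + (j+1))])) =
              exp_divdiff (-(\<beta>/2)) (map x [0..<r+1])
              * (\<Sum>m=j+1..q. exp_divdiff (-(\<beta>/2)) (map x [r..<q+1] @ [x m]))"
          using shiftsum[of "\<lambda>m. exp_divdiff (-(\<beta>/2)) (map x [r..<q+1] @ [x m])"] by simp
      qed
    qed
    finally show ?thesis .
  qed
  finally show ?thesis unfolding a_def b_def .
qed

end
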